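(* Let $M$ be a matroid of rank $d$, viewed as its collection of independent sets, and for $0\le i\le d$ let $f_i$ be the number of $i$-element independent sets of $M$. If $M$ has no coloops, then for every $0\le k\le d$, $$0\le \sum_{i=k}^{d}\binom{i}{k}(-2)^{d-i}f_i.$$
   Context: A coloop of a matroid is an element contained in every basis. *)

theory Defs
  imports Main
begin

definition matroid :: "'a set \<Rightarrow> 'a set set \<Rightarrow> bool" where
  "matroid E \<I> \<longleftrightarrow> finite E \<and> \<I> \<subseteq> Pow E \<and> {} \<in> \<I>
     \<and> (\<forall>A B. A \<in> \<I> \<and> B \<subseteq> A \<longrightarrow> B \<in> \<I>)
     \<and> (\<forall>A B. A \<in> \<I> \<and> B \<in> \<I> \<and> card A < card B \<longrightarrow> (\<exists>x\<in>B - A. insert x A \<in> \<I>))"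

definition basis :: "'a set set \<Rightarrow> 'a set \<Rightarrow> bool" where
  "basis \<I> B \<longleftrightarrow> B \<in> \<I> \<and> (\<forall>A\<in>\<I>. B \<subseteq> A \<longrightarrow> A = B)"

definition mrank :: "'a set set \<Rightarrow> nat" where
  "mrank \<I> = Max (card ` \<I>)"

definition coloop :: "'a set \<Rightarrow> 'a set set \<Rightarrow> 'a \<Rightarrow> bool" where
  "coloop E \<I> e \<longleftrightarrow> e \<in> E \<and> (\<forall>B. basis \<I> B \<longrightarrow> e \<in> B)"

definition fvec :: "'a set set \<Rightarrow> nat \<Rightarrow> nat" where
  "fvec \<I> i = card {A \<in> \<I>. card A = i}"

end

theory Submission
  imports Defs
begin


definition Sg :: "'a set set \<Rightarrow> nat \<Rightarrow> int" where
  "Sg I d = (\<Sum>A\<in>I. (-2) ^ (d - card A))"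
definition dl :: "'a set set \<Rightarrow> 'a \<Rightarrow> 'a set set" where
  "dl I e = {A\<in>I. e \<notin> A}"
definition ct :: "'a set set \<Rightarrow> 'a set \<Rightarrow> 'a set set" where
  "ct I X = {A. A \<inter> X = {} \<and> A \<union> X \<in> I}"
definition rk :: "'a set set \<Rightarrow> nat \<Rightarrow> bool" where
  "rk I d \<longleftrightarrow> (\<exists>B\<in>I. card B = d) \<and> (\<forall>A\<in>I. card A \<le> d)"
definition ncl :: "'a set \<Rightarrow> 'a set set \<Rightarrow> nat \<Rightarrow> bool" where
  "ncl E I d \<longleftrightarrow> (\<forall>x\<in>E. \<exists>B\<in>I. card B = d \<and> x \<notin> B)"

lemma mat_fin:
  assumes "matroid E I"
  shows "finite I" "A \<in> I \<Longrightarrow> finite A" "A \<in> I \<Longrightarrow> A \<subseteq> E"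
    "A \<in> I \<Longrightarrow> B \<subseteq> A \<Longrightarrow> B \<in> I" "{} \<in> I"
  using assms unfolding matroid_def
  by (auto intro: finite_subset dest: finite_Pow_iff[THEN iffD2] rev_finite_subset)

lemma mat_aug:
  assumes "matroid E I" "A \<in> I" "B \<in> I" "card A < card B"
  shows "\<exists>x\<in>B - A. insert x A \<in> I"
  using assms unfolding matroid_def by blast

lemma mat_ext:
  assumes m: "matroid E I" and r: "rk I d" and B: "B \<in> I" "card B = d"
  shows "X \<in> I \<Longrightarrow> \<exists>B'\<in>I. X \<subseteq> B' \<and> B' \<subseteq> X \<union> B \<and> card B' = d"
proof (induction "d - card X" arbitrary: X rule: less_induct)
  case less
  show ?case
  proof (cases "card X < d")
    case False
    then have "card X = d" using less.prems r unfolding rk_def by (meson antisym not_le)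
    then show ?thesis using less.prems by blast
  next
    case True
    then obtain x where x: "x \<in> B - X" "insert x X \<in> I"
      using mat_aug[OF m less.prems B(1)] B(2) by auto
    have fX: "finite X" using mat_fin(2)[OF m less.prems] .
    have "d - card (insert x X) < d - card X" using x fX True by simp
    from less.hyps[OF this x(2)] obtain B' where "B'\<in>I" "insert x X \<subseteq> B'"
      "B' \<subseteq> insert x X \<union> B" "card B' = d" by blast
    then show ?thesis using x by blast
  qed
qed

lemma basis_card:
  assumes m: "matroid E I" and r: "rk I d"
  shows "basis I B \<longleftrightarrow> B \<in> I \<and> card B = d"
proof
  assume b: "basis I B"
  then have BI: "B \<in> I" unfolding basis_def by blast
  obtain A where A: "A \<in> I" "card A = d" using r unfolding rk_def by blast
  have "\<not> card B < d"
  proof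
    assume "card B < d"
    then obtain x where "x \<in> A - B" "insert x B \<in> I" using mat_aug[OF m BI A(1)] A(2) by auto
    then show False using b unfolding basis_def by blast
  qed
  then show "B \<in> I \<and> card B = d" using BI r unfolding rk_def by (meson antisym not_le)
next
  assume "B \<in> I \<and> card B = d"
  then show "basis I B" unfolding basis_def using r unfolding rk_def
    by (metis card_seteq mat_fin(2)[OF m])
qed

lemma dl_mat:
  assumes m: "matroid E I" shows "matroid (E - {e}) (dl I e)"
proof -
  have "\<exists>x\<in>B - A. insert x A \<in> dl I e" if h: "A \<in> dl I e" "B \<in> dl I e" "card A < card B" for A B
  proof -
    have "A \<in> I" "B \<in> I" using h unfolding dl_def by auto
    then obtain x where "x \<in> B - A" "insert x A \<in> I" using h(3) mat_aug[OF m] by blast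
    then show ?thesis using h unfolding dl_def by auto
  qed
  then show ?thesis using m unfolding matroid_def dl_def by auto
qed

lemma ct_mat:
  assumes m: "matroid E I" and X: "X \<in> I" shows "matroid (E - X) (ct I X)"
proof -
  have fX: "finite X" using mat_fin(2)[OF m X] .
  have aug: "\<exists>x\<in>B - A. insert x A \<in> ct I X" if h: "A \<in> ct I X" "B \<in> ct I X" "card A < card B" for A B
  proof -
    have AB: "A \<union> X \<in> I" "B \<union> X \<in> I" "A \<inter> X = {}" "B \<inter> X = {}" using h unfolding ct_def by auto
    have "finite (A \<union> X)" "finite (B \<union> X)" using mat_fin(2)[OF m AB(1)] mat_fin(2)[OF m AB(2)] by blast+
    then have fA: "finite A" "finite B" by simp_all
    have "card (A \<union> X) < card (B \<union> X)" using h(3) AB fA fX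
      by (simp add: card_Un_disjoint)
    then obtain x where x: "x \<in> (B \<union> X) - (A \<union> X)" "insert x (A \<union> X) \<in> I"
      using AB mat_aug[OF m] by blast
    have "insert x A \<in> ct I X" unfolding ct_def using x AB by auto
    then show ?thesis using x by blast
  qed
  have dc: "C \<in> ct I X" if "A \<in> ct I X" "C \<subseteq> A" for A C
  proof -
    have "A \<union> X \<in> I" "A \<inter> X = {}" using that(1) unfolding ct_def by auto
    moreover have "C \<union> X \<subseteq> A \<union> X" using that(2) by blast
    ultimately have "C \<union> X \<in> I" "C \<inter> X = {}" using mat_fin(4)[OF m] that(2) by blast+
    then show ?thesis unfolding ct_def by blast
  qed
  have pw: "ct I X \<subseteq> Pow (E - X)"
  proof
    fix A assume "A \<in> ct I X"
    then have "A \<union> X \<in> I" "A \<inter> X = {}" unfolding ct_def by auto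
    then have "A \<union> X \<subseteq> E" "A \<inter> X = {}" using mat_fin(3)[OF m] by blast+
    then show "A \<in> Pow (E - X)" by blast
  qed
  have em: "{} \<in> ct I X" unfolding ct_def using X by simp
  have "finite E" using m unfolding matroid_def by blast
  then have fE: "finite (E - X)" by simp
  show ?thesis unfolding matroid_def
    apply (intro conjI allI impI)
    using fE pw em dc aug by blast+
qed

lemma ct_rk:
  assumes m: "matroid E I" and r: "rk I d" and X: "X \<in> I"
  shows "rk (ct I X) (d - card X)"
proof -
  have fX: "finite X" using mat_fin(2)[OF m X] .
  obtain B where B: "B \<in> I" "card B = d" using r unfolding rk_def by blast
  obtain B' where B': "B' \<in> I" "X \<subseteq> B'" "card B' = d" using mat_ext[OF m r B X] by blast
  have fB': "finite B'" using mat_fin(2)[OF m B'(1)] .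
  have "B' - X \<in> ct I X" using B' unfolding ct_def by (simp add: Un_absorb2 Diff_disjoint Int_commute)
  moreover have "card (B' - X) = d - card X" using B' fB' fX by (simp add: card_Diff_subset)
  moreover have "card A \<le> d - card X" if "A \<in> ct I X" for A
  proof -
    have AX: "A \<union> X \<in> I" "A \<inter> X = {}" using that unfolding ct_def by auto
    have "finite (A \<union> X)" using mat_fin(2)[OF m AX(1)] .
    then have fA: "finite A" by simp
    have "card (A \<union> X) \<le> d" using r AX(1) unfolding rk_def by blast
    moreover have "card (A \<union> X) = card A + card X" using fA fX AX(2) by (rule card_Un_disjoint)
    ultimately show ?thesis by simp
  qed
  ultimately show ?thesis unfolding rk_def by blast
qed

lemma ct_ncl:
  assumes m: "matroid E I" and r: "rk I d" and n: "ncl E I d" and X: "X \<in> I"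
  shows "ncl (E - X) (ct I X) (d - card X)"
  unfolding ncl_def
proof
  fix x assume x: "x \<in> E - X"
  have fX: "finite X" using mat_fin(2)[OF m X] .
  obtain B where B: "B \<in> I" "card B = d" "x \<notin> B" using n x unfolding ncl_def by blast
  obtain B' where B': "B' \<in> I" "X \<subseteq> B'" "B' \<subseteq> X \<union> B" "card B' = d"
    using mat_ext[OF m r B(1,2) X] by blast
  have fB': "finite B'" using mat_fin(2)[OF m B'(1)] .
  have "B' - X \<in> ct I X" using B' unfolding ct_def by (simp add: Un_absorb2 Diff_disjoint Int_commute)
  moreover have "card (B' - X) = d - card X" using B' fB' fX by (simp add: card_Diff_subset)
  moreover have "x \<notin> B' - X" using B' B x by blast
  ultimately show "\<exists>B\<in>ct I X. card B = d - card X \<and> x \<notin> B" by blast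
qed

lemma dl_rk:
  assumes "rk I d" "B \<in> I" "card B = d" "e \<notin> B" shows "rk (dl I e) d"
  using assms unfolding rk_def dl_def by auto



lemma Sg_split:
  assumes fI: "finite I" and fA: "\<And>A. A \<in> I \<Longrightarrow> finite A"
  shows "Sg I d = Sg (dl I e) d + Sg (ct I {e}) (d - 1)"
proof -
  have U: "I = dl I e \<union> {A\<in>I. e \<in> A}" unfolding dl_def by blast
  have D: "dl I e \<inter> {A\<in>I. e \<in> A} = {}" unfolding dl_def by blast
  have fd: "finite (dl I e)" "finite {A\<in>I. e \<in> A}" using fI unfolding dl_def by auto
  have img: "{A\<in>I. e \<in> A} = insert e ` ct I {e}"
  proof (rule set_eqI, rule iffI)
    fix A assume "A \<in> {A\<in>I. e \<in> A}"
    then have "A - {e} \<in> ct I {e}" "A = insert e (A - {e})" unfolding ct_def by (auto simp: insert_absorb)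
    then show "A \<in> insert e ` ct I {e}" by blast
  next
    fix A assume "A \<in> insert e ` ct I {e}"
    then show "A \<in> {A\<in>I. e \<in> A}" unfolding ct_def by auto
  qed
  have inj: "inj_on (insert e) (ct I {e})" unfolding ct_def inj_on_def by blast
  have "Sg I d = Sg (dl I e) d + (\<Sum>A\<in>{A\<in>I. e \<in> A}. (-2) ^ (d - card A))"
    unfolding Sg_def by (subst U, rule sum.union_disjoint[OF fd D])
  also have "(\<Sum>A\<in>{A\<in>I. e \<in> A}. (-2::int) ^ (d - card A)) = (\<Sum>A\<in>ct I {e}. (-2) ^ (d - card (insert e A)))"
    unfolding img using sum.reindex[OF inj] by simp
  also have "\<dots> = Sg (ct I {e}) (d - 1)" unfolding Sg_def
  proof (rule sum.cong[OF refl])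
    fix A assume "A \<in> ct I {e}"
    then have "A \<union> {e} \<in> I" "e \<notin> A" unfolding ct_def by auto
    then have "finite (A \<union> {e})" "e \<notin> A" using fA by blast+
    then show "(-2::int) ^ (d - card (insert e A)) = (-2) ^ (d - 1 - card A)" by simp
  qed
  finally show ?thesis .
qed

lemma Sg_col:
  assumes fJ: "finite J" and fA: "\<And>A. A \<in> J \<Longrightarrow> finite A"
    and dc: "\<And>A C. A \<in> J \<Longrightarrow> C \<subseteq> A \<Longrightarrow> C \<in> J"
    and cd: "\<And>A. A \<in> J \<Longrightarrow> card A \<le> d"
    and ins: "\<And>A. A \<in> J \<Longrightarrow> f \<notin> A \<Longrightarrow> insert f A \<in> J"
  shows "Sg J d = - Sg (dl J f) (d - 1)"
proof -
  have eq: "ct J {f} = dl J f"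
  proof (rule set_eqI, rule iffI)
    fix A assume "A \<in> ct J {f}"
    then have "A \<union> {f} \<in> J" "f \<notin> A" unfolding ct_def by auto
    then show "A \<in> dl J f" using dc unfolding dl_def by blast
  next
    fix A assume "A \<in> dl J f"
    then have "A \<in> J" "f \<notin> A" unfolding dl_def by auto
    then show "A \<in> ct J {f}" using ins unfolding ct_def by auto
  qed
  have "Sg (dl J f) d = -2 * Sg (dl J f) (d - 1)" unfolding Sg_def sum_distrib_left
  proof (rule sum.cong[OF refl])
    fix A assume "A \<in> dl J f"
    then have "A \<in> J" "f \<notin> A" unfolding dl_def by auto
    then have "card (insert f A) \<le> d" "finite A" using ins cd fA by blast+
    then have "card A + 1 \<le> d" using \<open>f \<notin> A\<close> by simp
    then have "d - card A = Suc (d - 1 - card A)" by simp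
    then show "(-2::int) ^ (d - card A) = -2 * (-2) ^ (d - 1 - card A)" by simp
  qed
  then show ?thesis using Sg_split[OF fJ fA, of d f] eq by simp
qed



lemma main_lemma:
  "matroid E I \<Longrightarrow> rk I d \<Longrightarrow> ncl E I d \<Longrightarrow> 0 \<le> Sg I d"
proof (induction "card E" arbitrary: E I d rule: less_induct)
  case less
  note m = less.prems(1) and r = less.prems(2) and n = less.prems(3)
  have fE: "finite E" using m unfolding matroid_def by blast
  show ?case
  proof (cases "d = 0")
    case True
    then show ?thesis unfolding Sg_def by simp
  next
    case False
    obtain B where B: "B \<in> I" "card B = d" using r unfolding rk_def by blast
    then have "B \<noteq> {}" using False by auto
    then obtain e where eB: "e \<in> B" by blast
    have e1: "{e} \<in> I" using mat_fin(4)[OF m B(1)] eB by blast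
    have eE: "e \<in> E" using mat_fin(3)[OF m B(1)] eB by blast
    obtain B0 where B0: "B0 \<in> I" "card B0 = d" "e \<notin> B0" using n eE unfolding ncl_def by blast
    have rd: "rk (dl I e) d" using dl_rk[OF r B0] .
    have md: "matroid (E - {e}) (dl I e)" using dl_mat[OF m] .
    have mc: "matroid (E - {e}) (ct I {e})" using ct_mat[OF m e1] .
    have rc: "rk (ct I {e}) (d - 1)" using ct_rk[OF m r e1] by simp
    have nc: "ncl (E - {e}) (ct I {e}) (d - 1)" using ct_ncl[OF m r n e1] by simp
    have lt: "card (E - {e}) < card E" using fE eE by (meson card_Diff1_less)
    have Hc: "0 \<le> Sg (ct I {e}) (d - 1)" using less.hyps[OF lt mc rc nc] .
    have sp: "Sg I d = Sg (dl I e) d + Sg (ct I {e}) (d - 1)"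
      using Sg_split[OF mat_fin(1)[OF m] mat_fin(2)[OF m]] .
    show ?thesis
    proof (cases "ncl (E - {e}) (dl I e) d")
      case True
      then have "0 \<le> Sg (dl I e) d" using less.hyps[OF lt md rd] by blast
      then show ?thesis using sp Hc by simp
    next
      case False
      then obtain f where f: "f \<in> E - {e}" and fB: "\<And>B. B \<in> dl I e \<Longrightarrow> card B = d \<Longrightarrow> f \<in> B"
        unfolding ncl_def by blast
      have F1: "insert f A \<in> dl I e" if A: "A \<in> dl I e" "f \<notin> A" for A
      proof -
        have AI: "A \<in> I" "e \<notin> A" using A unfolding dl_def by auto
        obtain B' where B': "B' \<in> I" "A \<subseteq> B'" "B' \<subseteq> A \<union> B0" "card B' = d"
          using mat_ext[OF m r B0(1,2) AI(1)] by blast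
        have "e \<notin> B'" using B' AI B0 by blast
        then have "B' \<in> dl I e" using B' unfolding dl_def by blast
        then have "f \<in> B'" using fB B' by blast
        then have "insert f A \<subseteq> B'" using B' by blast
        then have "insert f A \<in> I" using mat_fin(4)[OF m B'(1)] by blast
        then show ?thesis using AI f unfolding dl_def by blast
      qed
      have F2: "insert e A \<in> I" if A: "A \<in> I" "e \<notin> A" "f \<notin> A" for A
      proof -
        obtain B1 where B1: "B1 \<in> I" "card B1 = d" "f \<notin> B1" using n f unfolding ncl_def by blast
        obtain B' where B': "B' \<in> I" "A \<subseteq> B'" "B' \<subseteq> A \<union> B1" "card B' = d"
          using mat_ext[OF m r B1(1,2) A(1)] by blast
        have fB': "f \<notin> B'" using B' A B1 by blast
        have "e \<in> B'"
        proof (rule ccontr)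
          assume "e \<notin> B'"
          then have "B' \<in> dl I e" using B' unfolding dl_def by blast
          then show False using fB B' fB' by blast
        qed
        then have "insert e A \<subseteq> B'" using B' by blast
        then show ?thesis using mat_fin(4)[OF m B'(1)] by blast
      qed
      have col: "Sg (dl I e) d = - Sg (dl (dl I e) f) (d - 1)"
      proof (rule Sg_col)
        show "finite (dl I e)" using mat_fin(1)[OF md] .
        show "\<And>A. A \<in> dl I e \<Longrightarrow> finite A" using mat_fin(2)[OF md] .
        show "\<And>A C. A \<in> dl I e \<Longrightarrow> C \<subseteq> A \<Longrightarrow> C \<in> dl I e" using mat_fin(4)[OF md] .
        show "\<And>A. A \<in> dl I e \<Longrightarrow> card A \<le> d" using rd unfolding rk_def by blast
        show "\<And>A. A \<in> dl I e \<Longrightarrow> f \<notin> A \<Longrightarrow> insert f A \<in> dl I e" using F1 .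
      qed
      have sp2: "Sg (ct I {e}) (d - 1) = Sg (dl (ct I {e}) f) (d - 1) + Sg (ct (ct I {e}) {f}) (d - 1 - 1)"
        using Sg_split[OF mat_fin(1)[OF mc] mat_fin(2)[OF mc]] .
      have eqK: "dl (ct I {e}) f = dl (dl I e) f"
      proof (rule set_eqI, rule iffI)
        fix A assume "A \<in> dl (ct I {e}) f"
        then have "A \<union> {e} \<in> I" "e \<notin> A" "f \<notin> A" unfolding dl_def ct_def by auto
        moreover then have "A \<in> I" using mat_fin(4)[OF m] by blast
        ultimately show "A \<in> dl (dl I e) f" unfolding dl_def by blast
      next
        fix A assume "A \<in> dl (dl I e) f"
        then have "A \<in> I" "e \<notin> A" "f \<notin> A" unfolding dl_def by auto
        moreover then have "insert e A \<in> I" using F2 by blast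
        ultimately show "A \<in> dl (ct I {e}) f" unfolding dl_def ct_def by auto
      qed
      have tot: "Sg I d = Sg (ct (ct I {e}) {f}) (d - 1 - 1)"
        using sp col sp2 eqK by simp
      show ?thesis
      proof (cases "{f} \<in> ct I {e}")
        case True
        have mcc: "matroid (E - {e} - {f}) (ct (ct I {e}) {f})" using ct_mat[OF mc True] .
        have rcc: "rk (ct (ct I {e}) {f}) (d - 1 - 1)" using ct_rk[OF mc rc True] by simp
        have ncc: "ncl (E - {e} - {f}) (ct (ct I {e}) {f}) (d - 1 - 1)" using ct_ncl[OF mc rc nc True] by simp
        have lt2: "card (E - {e} - {f}) < card E" using fE eE f
          by (meson Diff_subset lt order_le_less_trans card_mono finite_Diff)
        show ?thesis using tot less.hyps[OF lt2 mcc rcc ncc] by simp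
      next
        case False
        have "ct (ct I {e}) {f} = {}"
        proof (rule ccontr)
          assume "ct (ct I {e}) {f} \<noteq> {}"
          then obtain A where "A \<in> ct (ct I {e}) {f}" by blast
          then have "A \<union> {f} \<in> ct I {e}" unfolding ct_def by blast
          then have "{f} \<in> ct I {e}" using mat_fin(4)[OF mc] by blast
          then show False using False by blast
        qed
        then show ?thesis using tot unfolding Sg_def by simp
      qed
    qed
  qed
qed



lemma inner_sum:
  assumes m: "matroid E I" and X: "X \<in> I"
  shows "(\<Sum>A\<in>{A\<in>I. X \<subseteq> A}. (-2::int) ^ (d - card A)) = Sg (ct I X) (d - card X)"
proof -
  have fX: "finite X" using mat_fin(2)[OF m X] .
  have img: "{A\<in>I. X \<subseteq> A} = (\<lambda>A'. A' \<union> X) ` ct I X"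
  proof (rule set_eqI, rule iffI)
    fix A assume A: "A \<in> {A\<in>I. X \<subseteq> A}"
    have e: "(A - X) \<union> X = A" using A by blast
    then have "A - X \<in> ct I X" "A = (A - X) \<union> X" using A unfolding ct_def by auto
    then show "A \<in> (\<lambda>A'. A' \<union> X) ` ct I X" by blast
  next
    fix A assume "A \<in> (\<lambda>A'. A' \<union> X) ` ct I X"
    then show "A \<in> {A\<in>I. X \<subseteq> A}" unfolding ct_def by auto
  qed
  have inj: "inj_on (\<lambda>A'. A' \<union> X) (ct I X)"
  proof (rule inj_onI)
    fix A B assume "A \<in> ct I X" "B \<in> ct I X" "A \<union> X = B \<union> X"
    then show "A = B" unfolding ct_def by blast
  qed
  have "(\<Sum>A\<in>{A\<in>I. X \<subseteq> A}. (-2::int) ^ (d - card A)) = (\<Sum>A'\<in>ct I X. (-2) ^ (d - card (A' \<union> X)))"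
    unfolding img using sum.reindex[OF inj] by simp
  also have "\<dots> = Sg (ct I X) (d - card X)" unfolding Sg_def
  proof (rule sum.cong[OF refl])
    fix A assume "A \<in> ct I X"
    then have AX: "A \<union> X \<in> I" "A \<inter> X = {}" unfolding ct_def by auto
    then have "finite (A \<union> X)" using mat_fin(2)[OF m] by blast
    then have "finite A" by simp
    then have "card (A \<union> X) = card A + card X" using fX AX(2) by (rule card_Un_disjoint)
    then show "(-2::int) ^ (d - card (A \<union> X)) = (-2) ^ (d - card X - card A)" by (simp add: add.commute)
  qed
  finally show ?thesis .
qed

theorem theorem0p3:
  fixes E :: "'a set" and \<I> :: "'a set set" and d k :: nat
  assumes "matroid E \<I>"
    and "mrank \<I> = d"
    and "\<forall>e\<in>E. \<not> coloop E \<I> e"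
    and "k \<le> d"
  shows "0 \<le> (\<Sum>i = k..d. int (i choose k) * (-2) ^ (d - i) * int (fvec \<I> i))"
proof -
  note m = assms(1)
  define I where "I = \<I>"
  have m: "matroid E I" using assms(1) unfolding I_def .
  have fI: "finite I" using mat_fin(1)[OF m] .
  have neI: "I \<noteq> {}" using mat_fin(5)[OF m] by blast
  have r: "rk I d" unfolding rk_def
  proof
    have "Max (card ` I) \<in> card ` I" using fI neI by simp
    then show "\<exists>B\<in>I. card B = d" using assms(2) unfolding mrank_def I_def by auto
    show "\<forall>A\<in>I. card A \<le> d"
    proof
      fix A assume "A \<in> I"
      then have "card A \<le> Max (card ` I)" using Max_ge[OF finite_imageI[OF fI]] by blast
      then show "card A \<le> d" using assms(2) unfolding mrank_def I_def by simp
    qed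
  qed
  have n: "ncl E I d" unfolding ncl_def
  proof
    fix x assume "x \<in> E"
    then obtain B where "basis I B" "x \<notin> B" using assms(3) unfolding coloop_def I_def by blast
    then show "\<exists>B\<in>I. card B = d \<and> x \<notin> B" using basis_card[OF m r] by blast
  qed
  define t where "t A = (-2::int) ^ (d - card A)" for A :: "'a set"
  define h where "h A = int (card A choose k) * t A" for A :: "'a set"
  define K where "K = {X\<in>I. card X = k}"
  have cd: "\<And>A. A \<in> I \<Longrightarrow> card A \<le> d" using r unfolding rk_def by blast
  have "(\<Sum>i = k..d. int (i choose k) * (-2) ^ (d - i) * int (fvec \<I> i))
      = (\<Sum>i = k..d. \<Sum>A\<in>{A\<in>{A\<in>I. k \<le> card A}. card A = i}. h A)"
  proof (rule sum.cong[OF refl])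
    fix i assume i: "i \<in> {k..d}"
    have "{A\<in>{A\<in>I. k \<le> card A}. card A = i} = {A\<in>I. card A = i}" using i by auto
    then have "(\<Sum>A\<in>{A\<in>{A\<in>I. k \<le> card A}. card A = i}. h A) = (\<Sum>A\<in>{A\<in>I. card A = i}. int (i choose k) * (-2) ^ (d - i))"
      unfolding h_def t_def by simp
    also have "\<dots> = int (card {A\<in>I. card A = i}) * (int (i choose k) * (-2) ^ (d - i))" by simp
    finally show "int (i choose k) * (-2) ^ (d - i) * int (fvec \<I> i) = (\<Sum>A\<in>{A\<in>{A\<in>I. k \<le> card A}. card A = i}. h A)"
      unfolding fvec_def I_def by simp
  qed
  also have "\<dots> = (\<Sum>A\<in>{A\<in>I. k \<le> card A}. h A)"
    by (rule sum.group) (use fI cd in auto)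
  also have "\<dots> = (\<Sum>A\<in>I. h A)"
    by (rule sum.mono_neutral_left) (use fI in \<open>auto simp: h_def\<close>)
  also have "\<dots> = (\<Sum>A\<in>I. \<Sum>X\<in>{X\<in>K. X \<subseteq> A}. t A)"
  proof (rule sum.cong[OF refl])
    fix A assume A: "A \<in> I"
    have "{X\<in>K. X \<subseteq> A} = {X. X \<subseteq> A \<and> card X = k}"
      unfolding K_def using mat_fin(4)[OF m A] by blast
    moreover have "card {X. X \<subseteq> A \<and> card X = k} = card A choose k"
      using n_subsets mat_fin(2)[OF m A] by blast
    ultimately show "h A = (\<Sum>X\<in>{X\<in>K. X \<subseteq> A}. t A)" unfolding h_def by simp
  qed
  also have "\<dots> = (\<Sum>X\<in>K. \<Sum>A\<in>{A\<in>I. X \<subseteq> A}. t A)"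
    using sum.swap_restrict[of I K "\<lambda>A X. t A" "\<lambda>A X. X \<subseteq> A"] fI unfolding K_def by simp
  also have "\<dots> = (\<Sum>X\<in>K. Sg (ct I X) (d - k))"
  proof (rule sum.cong[OF refl])
    fix X assume "X \<in> K"
    then have X: "X \<in> I" "card X = k" unfolding K_def by auto
    show "(\<Sum>A\<in>{A\<in>I. X \<subseteq> A}. t A) = Sg (ct I X) (d - k)"
      using inner_sum[OF m X(1), of d] X(2) unfolding t_def by simp
  qed
  also have "0 \<le> \<dots>"
  proof (rule sum_nonneg)
    fix X assume "X \<in> K"
    then have X: "X \<in> I" "card X = k" unfolding K_def by auto
    show "0 \<le> Sg (ct I X) (d - k)"
      using main_lemma[OF ct_mat[OF m X(1)] ct_rk[OF m r X(1)] ct_ncl[OF m r n X(1)]] X(2) by simp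
  qed
  finally show ?thesis by simp
qed

end
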